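(* Let $\mathcal L$ be an MV-algebra and $P$ a prime implication filter such that the (linearly ordered) quotient $\mathcal L/P$ is non-discrete. For $\mathcal F,\mathcal G\in\mathrm{PSpec}(P)$, define $\mathcal F\equiv\mathcal G$ iff $\mathcal F\sqsubseteq\!\!\to\mathcal G=\mathcal G\sqsubseteq\!\!\to\mathcal F=P$. Then $\mathcal F\mapsto\mathcal F^+$ and $(\mathcal F,\mathcal G)\mapsto\mathcal F\sqsubseteq\!\!\to\mathcal G$ induce well-defined operations on $\mathrm{PSpec}(P)/\!\equiv$. The structure $$\hat{\mathcal L}_P=\langle\mathrm{PSpec}(P)/\!\equiv,\ {}^+,\ \sqsubseteq\!\!\to\rangle$$ is a linearly ordered MV-algebra, taken in the implication–negation signature (as a Wajsberg algebra) with ${}^+$ as negation, $\sqsubseteq\!\!\to$ as implication, and top element the class of $P$. Its order is given by $[\mathcal F]\le[\mathcal G]$ iff $\mathcal F\sqsubseteq\!\!\to\mathcal G=P$.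
   Context: $\mathcal L=(L,\oplus,\lnot,0)$ is an MV-algebra. We write $1=\lnot0$, $x\otimes y=\lnot(\lnot x\oplus\lnot y)$, and $x\to y=\lnot x\oplus y$, and use the usual lattice order. An implication filter is a set $P\ni1$ closed under modus ponens. It is prime if $\mathcal L/P$ is linearly ordered, where $\mathcal L/P$ is the quotient by $x\sim_P y\iff x\to y,\ y\to x\in P$. Non-discrete means no element has an immediate successor or an immediate predecessor. A lattice filter is a nonempty upward-closed subset closed under $\wedge$. It is prime if it is proper and $a\vee b\in\mathcal F$ implies $a\in\mathcal F$ or $b\in\mathcal F$. For upward-closed $\mathcal F$ and $a\in L$, let $\mathcal F_a=\{z:z\to a\notin\mathcal F\}$, $\mathcal F^+=\mathcal F_0$, and $\mathcal K(\mathcal F)=\{z:\forall a\notin\mathcal F,\ z\to a\notin\mathcal F\}$. $\mathrm{PSpec}(P)$ is the set of prime lattice filters $\mathcal F$ with $\mathcal K(\mathcal F)=P$. For $\mathcal F\subseteq\mathcal G$ we put $\mathcal F\sqsubseteq\!\!\to\mathcal G=\bigcap_{a\in L\setminus\mathcal G}\mathcal F_a$, and in general $\mathcal F\sqsubseteq\!\!\to\mathcal G:=(\mathcal F\cap\mathcal G)\sqsubseteq\!\!\to\mathcal G$. *)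

theory Defs
  imports Main
begin

definition mv_algebra :: "('a \<Rightarrow> 'a \<Rightarrow> 'a) \<Rightarrow> ('a \<Rightarrow> 'a) \<Rightarrow> 'a \<Rightarrow> bool" where
  "mv_algebra oplus neg zero \<longleftrightarrow>
     (\<forall>x y z. oplus x (oplus y z) = oplus (oplus x y) z) \<and>
     (\<forall>x y. oplus x y = oplus y x) \<and>
     (\<forall>x. oplus x zero = x) \<and>
     (\<forall>x. neg (neg x) = x) \<and>
     (\<forall>x. oplus x (neg zero) = neg zero) \<and>
     (\<forall>x y. oplus (neg (oplus (neg x) y)) y = oplus (neg (oplus (neg y) x)) x)"

definition mv_one :: "('a \<Rightarrow> 'a) \<Rightarrow> 'a \<Rightarrow> 'a" where
  "mv_one neg zero = neg zero"

definition mv_imp :: "('a \<Rightarrow> 'a \<Rightarrow> 'a) \<Rightarrow> ('a \<Rightarrow> 'a) \<Rightarrow> 'a \<Rightarrow> 'a \<Rightarrow> 'a" where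
  "mv_imp oplus neg x y = oplus (neg x) y"

definition mv_le :: "('a \<Rightarrow> 'a \<Rightarrow> 'a) \<Rightarrow> ('a \<Rightarrow> 'a) \<Rightarrow> 'a \<Rightarrow> 'a \<Rightarrow> 'a \<Rightarrow> bool" where
  "mv_le oplus neg zero x y \<longleftrightarrow> mv_imp oplus neg x y = mv_one neg zero"

definition mv_sup :: "('a \<Rightarrow> 'a \<Rightarrow> 'a) \<Rightarrow> ('a \<Rightarrow> 'a) \<Rightarrow> 'a \<Rightarrow> 'a \<Rightarrow> 'a" where
  "mv_sup oplus neg x y = oplus (neg (oplus (neg x) y)) y"

definition mv_inf :: "('a \<Rightarrow> 'a \<Rightarrow> 'a) \<Rightarrow> ('a \<Rightarrow> 'a) \<Rightarrow> 'a \<Rightarrow> 'a \<Rightarrow> 'a" where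
  "mv_inf oplus neg x y = neg (mv_sup oplus neg (neg x) (neg y))"

definition impl_filter :: "('a \<Rightarrow> 'a \<Rightarrow> 'a) \<Rightarrow> ('a \<Rightarrow> 'a) \<Rightarrow> 'a \<Rightarrow> 'a set \<Rightarrow> bool" where
  "impl_filter oplus neg zero P \<longleftrightarrow>
     mv_one neg zero \<in> P \<and> (\<forall>x y. x \<in> P \<longrightarrow> mv_imp oplus neg x y \<in> P \<longrightarrow> y \<in> P)"

definition filt_sim :: "('a \<Rightarrow> 'a \<Rightarrow> 'a) \<Rightarrow> ('a \<Rightarrow> 'a) \<Rightarrow> 'a set \<Rightarrow> 'a \<Rightarrow> 'a \<Rightarrow> bool" where
  "filt_sim oplus neg P x y \<longleftrightarrow> mv_imp oplus neg x y \<in> P \<and> mv_imp oplus neg y x \<in> P"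

text \<open>Order of L/P on representatives: [x] \<le> [y] iff [x] \<rightarrow> [y] = [1], i.e. (x \<rightarrow> y) \<sim>_P 1\<close>
definition quot_le :: "('a \<Rightarrow> 'a \<Rightarrow> 'a) \<Rightarrow> ('a \<Rightarrow> 'a) \<Rightarrow> 'a \<Rightarrow> 'a set \<Rightarrow> 'a \<Rightarrow> 'a \<Rightarrow> bool" where
  "quot_le oplus neg zero P x y \<longleftrightarrow> filt_sim oplus neg P (mv_imp oplus neg x y) (mv_one neg zero)"

definition quot_less :: "('a \<Rightarrow> 'a \<Rightarrow> 'a) \<Rightarrow> ('a \<Rightarrow> 'a) \<Rightarrow> 'a \<Rightarrow> 'a set \<Rightarrow> 'a \<Rightarrow> 'a \<Rightarrow> bool" where
  "quot_less oplus neg zero P x y \<longleftrightarrow>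
     quot_le oplus neg zero P x y \<and> \<not> quot_le oplus neg zero P y x"

definition prime_impl_filter :: "('a \<Rightarrow> 'a \<Rightarrow> 'a) \<Rightarrow> ('a \<Rightarrow> 'a) \<Rightarrow> 'a \<Rightarrow> 'a set \<Rightarrow> bool" where
  "prime_impl_filter oplus neg zero P \<longleftrightarrow>
     impl_filter oplus neg zero P \<and>
     (\<forall>x y. quot_le oplus neg zero P x y \<or> quot_le oplus neg zero P y x)"

text \<open>L/P non-discrete: no class has an immediate successor (equivalently, no class
  has an immediate predecessor): strictly between any two classes there is a third.\<close>
definition quot_non_discrete :: "('a \<Rightarrow> 'a \<Rightarrow> 'a) \<Rightarrow> ('a \<Rightarrow> 'a) \<Rightarrow> 'a \<Rightarrow> 'a set \<Rightarrow> bool" where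
  "quot_non_discrete oplus neg zero P \<longleftrightarrow>
     (\<forall>x y. quot_less oplus neg zero P x y \<longrightarrow>
        (\<exists>z. quot_less oplus neg zero P x z \<and> quot_less oplus neg zero P z y))"

definition lattice_filter :: "('a \<Rightarrow> 'a \<Rightarrow> 'a) \<Rightarrow> ('a \<Rightarrow> 'a) \<Rightarrow> 'a \<Rightarrow> 'a set \<Rightarrow> bool" where
  "lattice_filter oplus neg zero F \<longleftrightarrow>
     F \<noteq> {} \<and>
     (\<forall>x y. x \<in> F \<longrightarrow> mv_le oplus neg zero x y \<longrightarrow> y \<in> F) \<and>
     (\<forall>x y. x \<in> F \<longrightarrow> y \<in> F \<longrightarrow> mv_inf oplus neg x y \<in> F)"

definition prime_lattice_filter :: "('a \<Rightarrow> 'a \<Rightarrow> 'a) \<Rightarrow> ('a \<Rightarrow> 'a) \<Rightarrow> 'a \<Rightarrow> 'a set \<Rightarrow> bool" where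
  "prime_lattice_filter oplus neg zero F \<longleftrightarrow>
     lattice_filter oplus neg zero F \<and> F \<noteq> UNIV \<and>
     (\<forall>a b. mv_sup oplus neg a b \<in> F \<longrightarrow> a \<in> F \<or> b \<in> F)"

definition filt_sub :: "('a \<Rightarrow> 'a \<Rightarrow> 'a) \<Rightarrow> ('a \<Rightarrow> 'a) \<Rightarrow> 'a set \<Rightarrow> 'a \<Rightarrow> 'a set" where
  "filt_sub oplus neg F a = {z. mv_imp oplus neg z a \<notin> F}"

definition filt_plus :: "('a \<Rightarrow> 'a \<Rightarrow> 'a) \<Rightarrow> ('a \<Rightarrow> 'a) \<Rightarrow> 'a \<Rightarrow> 'a set \<Rightarrow> 'a set" where
  "filt_plus oplus neg zero F = filt_sub oplus neg F zero"

definition filt_K :: "('a \<Rightarrow> 'a \<Rightarrow> 'a) \<Rightarrow> ('a \<Rightarrow> 'a) \<Rightarrow> 'a set \<Rightarrow> 'a set" where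
  "filt_K oplus neg F = {z. \<forall>a. a \<notin> F \<longrightarrow> mv_imp oplus neg z a \<notin> F}"

definition PSpec :: "('a \<Rightarrow> 'a \<Rightarrow> 'a) \<Rightarrow> ('a \<Rightarrow> 'a) \<Rightarrow> 'a \<Rightarrow> 'a set \<Rightarrow> 'a set set" where
  "PSpec oplus neg zero P =
     {F. prime_lattice_filter oplus neg zero F \<and> filt_K oplus neg F = P}"

text \<open>F \<sqsubseteq>\<rightarrow> G := (F \<inter> G) \<sqsubseteq>\<rightarrow> G = \<Inter>_{a \<in> L - G} (F \<inter> G)_a
  (for F \<subseteq> G this is the first clause of the definition).\<close>
definition sq_imp :: "('a \<Rightarrow> 'a \<Rightarrow> 'a) \<Rightarrow> ('a \<Rightarrow> 'a) \<Rightarrow> 'a set \<Rightarrow> 'a set \<Rightarrow> 'a set" where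
  "sq_imp oplus neg F G = (\<Inter>a \<in> - G. filt_sub oplus neg (F \<inter> G) a)"

definition pspec_equiv :: "('a \<Rightarrow> 'a \<Rightarrow> 'a) \<Rightarrow> ('a \<Rightarrow> 'a) \<Rightarrow> 'a \<Rightarrow> 'a set \<Rightarrow> ('a set \<times> 'a set) set" where
  "pspec_equiv oplus neg zero P =
     {(F, G). F \<in> PSpec oplus neg zero P \<and> G \<in> PSpec oplus neg zero P \<and>
              sq_imp oplus neg F G = P \<and> sq_imp oplus neg G F = P}"

definition hatL_carrier :: "('a \<Rightarrow> 'a \<Rightarrow> 'a) \<Rightarrow> ('a \<Rightarrow> 'a) \<Rightarrow> 'a \<Rightarrow> 'a set \<Rightarrow> 'a set set set" where
  "hatL_carrier oplus neg zero P = PSpec oplus neg zero P // pspec_equiv oplus neg zero P"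

definition hatL_class :: "('a \<Rightarrow> 'a \<Rightarrow> 'a) \<Rightarrow> ('a \<Rightarrow> 'a) \<Rightarrow> 'a \<Rightarrow> 'a set \<Rightarrow> 'a set \<Rightarrow> 'a set set" where
  "hatL_class oplus neg zero P F = pspec_equiv oplus neg zero P `` {F}"

definition hatL_neg :: "('a \<Rightarrow> 'a \<Rightarrow> 'a) \<Rightarrow> ('a \<Rightarrow> 'a) \<Rightarrow> 'a \<Rightarrow> 'a set \<Rightarrow> 'a set set \<Rightarrow> 'a set set" where
  "hatL_neg oplus neg zero P X =
     hatL_class oplus neg zero P (filt_plus oplus neg zero (SOME F. F \<in> X))"

definition hatL_imp :: "('a \<Rightarrow> 'a \<Rightarrow> 'a) \<Rightarrow> ('a \<Rightarrow> 'a) \<Rightarrow> 'a \<Rightarrow> 'a set \<Rightarrow> 'a set set \<Rightarrow> 'a set set \<Rightarrow> 'a set set" where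
  "hatL_imp oplus neg zero P X Y =
     hatL_class oplus neg zero P (sq_imp oplus neg (SOME F. F \<in> X) (SOME G. G \<in> Y))"

definition wajsberg_algebra :: "'b set \<Rightarrow> ('b \<Rightarrow> 'b \<Rightarrow> 'b) \<Rightarrow> ('b \<Rightarrow> 'b) \<Rightarrow> 'b \<Rightarrow> bool" where
  "wajsberg_algebra A imp neg tp \<longleftrightarrow>
     tp \<in> A \<and>
     (\<forall>x\<in>A. \<forall>y\<in>A. imp x y \<in> A) \<and>
     (\<forall>x\<in>A. neg x \<in> A) \<and>
     (\<forall>x\<in>A. imp tp x = x) \<and>
     (\<forall>x\<in>A. \<forall>y\<in>A. \<forall>z\<in>A. imp (imp x y) (imp (imp y z) (imp x z)) = tp) \<and>
     (\<forall>x\<in>A. \<forall>y\<in>A. imp (imp x y) y = imp (imp y x) x) \<and>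
     (\<forall>x\<in>A. \<forall>y\<in>A. imp (imp (neg x) (neg y)) (imp y x) = tp)"

definition wajsberg_le :: "('b \<Rightarrow> 'b \<Rightarrow> 'b) \<Rightarrow> 'b \<Rightarrow> 'b \<Rightarrow> 'b \<Rightarrow> bool" where
  "wajsberg_le imp tp x y \<longleftrightarrow> imp x y = tp"

definition linear_wajsberg_algebra :: "'b set \<Rightarrow> ('b \<Rightarrow> 'b \<Rightarrow> 'b) \<Rightarrow> ('b \<Rightarrow> 'b) \<Rightarrow> 'b \<Rightarrow> bool" where
  "linear_wajsberg_algebra A imp neg tp \<longleftrightarrow>
     wajsberg_algebra A imp neg tp \<and>
     (\<forall>x\<in>A. \<forall>y\<in>A. wajsberg_le imp tp x y \<or> wajsberg_le imp tp y x)"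

end

theory Submission
  imports Defs
begin

locale mvl =
  fixes oplus :: "'a \<Rightarrow> 'a \<Rightarrow> 'a" (infixl "\<oplus>" 65) and neg :: "'a \<Rightarrow> 'a" and zero :: 'a and P :: "'a set"
  assumes mv: "mv_algebra oplus neg zero"
  and prime: "prime_impl_filter oplus neg zero P" and proper: "P \<noteq> UNIV"
  and dense: "quot_non_discrete oplus neg zero P"
begin

abbreviation one where "one \<equiv> neg zero"
definition imp where "imp x y = neg x \<oplus> y"
definition tm where "tm x y = neg (neg x \<oplus> neg y)"
definition le where "le x y \<longleftrightarrow> imp x y \<in> P"

lemma assocR: "x \<oplus> y \<oplus> z = x \<oplus> (y \<oplus> z)" using mv unfolding mv_algebra_def by metis
lemma comm: "x \<oplus> y = y \<oplus> x" using mv unfolding mv_algebra_def by metis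
lemma lcomm: "x \<oplus> (y \<oplus> z) = y \<oplus> (x \<oplus> z)" by (metis assocR comm)
lemmas ac = assocR comm lcomm
lemma zr[simp]: "x \<oplus> zero = x" using mv unfolding mv_algebra_def by metis
lemma zl[simp]: "zero \<oplus> x = x" using zr comm by metis
lemma nn[simp]: "neg (neg x) = x" using mv unfolding mv_algebra_def by metis
lemma onr[simp]: "x \<oplus> one = one" using mv unfolding mv_algebra_def by metis
lemma onl[simp]: "one \<oplus> x = one" using onr comm by metis
lemma luk: "neg (neg x \<oplus> y) \<oplus> y = neg (neg y \<oplus> x) \<oplus> x" using mv unfolding mv_algebra_def by metis
lemma neg_one[simp]: "neg one = zero" by simp
lemma compl[simp]: "x \<oplus> neg x = one"
  using luk[of x one] by (simp add: comm)
lemma compl2[simp]: "neg x \<oplus> x = one" by (metis compl comm)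
lemma compl3[simp]: "x \<oplus> (neg x \<oplus> y) = one" by (metis assocR compl onl)
lemma compl4[simp]: "neg x \<oplus> (x \<oplus> y) = one" by (metis assocR compl2 onl)

lemma imp_one[simp]: "imp one x = x" by (simp add: imp_def)
lemma imp_to_one[simp]: "imp x one = one" by (simp add: imp_def)
lemma imp_self[simp]: "imp x x = one" by (simp add: imp_def)
lemma imp_zero: "imp x zero = neg x" by (simp add: imp_def)
lemma imp_from_zero[simp]: "imp zero x = one" by (simp add: imp_def)
lemma exch: "imp x (imp y z) = imp y (imp x z)" by (simp add: imp_def ac)
lemma resid: "imp v (imp z a) = imp (tm z v) a" by (simp add: imp_def tm_def ac)
lemma W2id: "imp (imp x y) (imp (imp y z) (imp x z)) = one"
proof -
  have "imp (imp x y) (imp (imp y z) (imp x z)) = neg (neg x \<oplus> y) \<oplus> neg x \<oplus> (neg (neg y \<oplus> z) \<oplus> z)"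
    by (simp add: imp_def ac)
  also have "\<dots> = neg (neg x \<oplus> y) \<oplus> neg x \<oplus> (neg (neg z \<oplus> y) \<oplus> y)" by (simp add: luk)
  also have "\<dots> = (neg (neg x \<oplus> y) \<oplus> (neg x \<oplus> y)) \<oplus> neg (neg z \<oplus> y)" by (simp only: ac)
  also have "\<dots> = one" by (simp only: compl2 onl)
  finally show ?thesis .
qed
lemma monoid: "imp (imp x x') (imp (x \<oplus> y) (x' \<oplus> y)) = one"
proof -
  have "imp (imp x x') (imp (x \<oplus> y) (x' \<oplus> y)) = (neg (neg x \<oplus> x') \<oplus> x') \<oplus> y \<oplus> neg (x \<oplus> y)"
    by (simp add: imp_def ac)
  also have "\<dots> = (neg (neg x' \<oplus> x) \<oplus> x) \<oplus> y \<oplus> neg (x \<oplus> y)" by (simp add: luk)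
  also have "\<dots> = neg (neg x' \<oplus> x) \<oplus> ((x \<oplus> y) \<oplus> neg (x \<oplus> y))" by (simp only: ac)
  also have "\<dots> = one" by (simp only: compl onr)
  finally show ?thesis .
qed
lemma tm_comm: "tm x y = tm y x" by (simp add: tm_def ac)
lemma tm_assoc: "tm (tm x y) z = tm x (tm y z)" by (simp add: tm_def ac)
lemma tm_lcomm: "tm x (tm y z) = tm y (tm x z)" by (simp add: tm_def ac)
lemma tm_one[simp]: "tm x one = x" "tm one x = x" by (simp_all add: tm_def)
lemma tm_zero[simp]: "tm x zero = zero" "tm zero x = zero" by (simp_all add: tm_def)
lemma min_sym: "tm x (imp x y) = tm y (imp y x)"
  unfolding tm_def imp_def using luk[of "neg x" "neg y"] by (simp add: comm)
lemma neg_tm: "neg (tm q h) = imp q (neg h)" by (simp add: tm_def imp_def)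
lemma imp_tm_le: "imp (tm x y) x = one" by (simp add: tm_def imp_def ac)
lemma le_imp_tm: "imp u (imp t (tm t u)) = one" by (simp add: resid tm_comm)
lemma le_imp_imp: "imp f (imp w f) = one" by (simp add: imp_def ac)
lemma le_dbl: "imp x (imp (imp x y) y) = one" by (metis exch imp_self)

lemma oneP[simp]: "one \<in> P" using prime unfolding prime_impl_filter_def impl_filter_def mv_one_def by blast
lemma MP: "x \<in> P \<Longrightarrow> imp x y \<in> P \<Longrightarrow> y \<in> P"
  using prime unfolding prime_impl_filter_def impl_filter_def mv_imp_def imp_def by blast
lemma mvimp[simp]: "mv_imp oplus neg x y = imp x y" by (simp add: mv_imp_def imp_def)
lemma quot_le_iff: "quot_le oplus neg zero P x y \<longleftrightarrow> le x y"
  by (simp add: quot_le_def filt_sim_def mv_one_def le_def)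
lemma le_total: "le x y \<or> le y x" using prime quot_le_iff unfolding prime_impl_filter_def by blast
lemma le_refl[simp]: "le x x" by (simp add: le_def)
lemma le_of: "imp x y = one \<Longrightarrow> le x y" by (simp add: le_def)
lemma le_trans: "le x y \<Longrightarrow> le y z \<Longrightarrow> le x z"
proof -
  assume "le x y" "le y z"
  have "imp (imp x y) (imp (imp y z) (imp x z)) \<in> P" by (simp add: W2id)
  thus ?thesis using \<open>le x y\<close> \<open>le y z\<close> MP unfolding le_def by blast
qed
lemma inP: "x \<in> P \<longleftrightarrow> le one x" by (simp add: le_def)
lemma le_one[simp]: "le x one" by (simp add: le_def)
lemma le_zero[simp]: "le zero x" by (simp add: le_def)
lemma mono_plus: "le x x' \<Longrightarrow> le (x \<oplus> y) (x' \<oplus> y)"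
proof -
  assume "le x x'"
  have "imp (imp x x') (imp (x \<oplus> y) (x' \<oplus> y)) \<in> P" by (simp add: monoid)
  thus ?thesis using \<open>le x x'\<close> MP unfolding le_def by blast
qed
lemma mono_plus2: "le y y' \<Longrightarrow> le (x \<oplus> y) (x \<oplus> y')" using mono_plus[of y y' x] by (simp add: comm)
lemma neg_anti: "le x y \<Longrightarrow> le (neg y) (neg x)" by (simp add: le_def imp_def comm)
lemma neg_anti_iff: "le (neg y) (neg x) \<longleftrightarrow> le x y" using neg_anti[of "neg y" "neg x"] neg_anti[of x y] by auto
lemma tm_mono: "le x x' \<Longrightarrow> le (tm x y) (tm x' y)" unfolding tm_def by (intro neg_anti mono_plus)
lemma tm_mono2: "le y y' \<Longrightarrow> le (tm x y) (tm x y')" using tm_mono[of y y' x] by (simp add: tm_comm)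
lemma imp_mono2: "le y y' \<Longrightarrow> le (imp x y) (imp x y')" unfolding imp_def by (rule mono_plus2)
lemma imp_anti1: "le x x' \<Longrightarrow> le (imp x' y) (imp x y)" unfolding imp_def by (intro mono_plus neg_anti)
lemma dense': "\<not> le y x \<Longrightarrow> \<exists>m. \<not> le m x \<and> \<not> le y m"
proof -
  assume a: "\<not> le y x"
  hence "quot_less oplus neg zero P x y" unfolding quot_less_def quot_le_iff using le_total by blast
  then obtain z where "quot_less oplus neg zero P x z" "quot_less oplus neg zero P z y"
    using dense unfolding quot_non_discrete_def by blast
  thus ?thesis unfolding quot_less_def quot_le_iff by blast
qed
lemma min_le1: "le (tm x (imp x y)) x" by (simp add: le_of imp_tm_le)
lemma min_le2: "le (tm x (imp x y)) y" using min_le1[of y x] by (simp add: min_sym)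
lemma min_ge1: "le x y \<Longrightarrow> le x (tm x (imp x y))"
  using tm_mono2[of one "imp x y" x] by (simp add: le_def)
lemma min_ge2: "le y x \<Longrightarrow> le y (tm x (imp x y))" using min_ge1[of y x] by (simp add: min_sym)
lemma P_tm: "p \<in> P \<Longrightarrow> le u (tm p u)" using tm_mono[of one p u] by (simp add: inP)
lemma imp_P: "le s v \<Longrightarrow> le u (tm (imp s v) u)" by (rule P_tm) (simp add: le_def)
lemma le_tm_imp: "le u (imp t (tm t u))" by (simp add: le_of le_imp_tm)
lemma le_imp_imp': "le f (imp w f)" by (simp add: le_of le_imp_imp)
lemma le_dbl': "le x (imp (imp x y) y)" by (simp add: le_of le_dbl)
lemma tm_le1: "le (tm x y) x" by (simp add: le_of imp_tm_le)

lemma canc: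
  assumes nvu: "\<not> le v u" and uv: "le u v" and h: "le (s \<oplus> v) (s \<oplus> u)"
  shows "s \<oplus> u \<in> P"
proof -
  define w where "w = neg (imp v u)"
  have "u \<oplus> w = neg (neg u \<oplus> v) \<oplus> v" unfolding w_def imp_def using luk[of v u] by (simp add: comm)
  moreover have "le (neg (neg u \<oplus> v)) zero" using uv neg_anti[of one "neg u \<oplus> v"] unfolding le_def imp_def by simp
  ultimately have uw: "le (u \<oplus> w) v" using mono_plus[of "neg (neg u \<oplus> v)" zero v] by simp
  define t where "t = s \<oplus> u"
  have "le (t \<oplus> w) (s \<oplus> v)" unfolding t_def using mono_plus2[OF uw, of s] by (simp add: assocR)
  hence tw: "le (t \<oplus> w) t" using h t_def le_trans by blast
  have "le (tm (neg t) (t \<oplus> w)) (tm (neg t) t)" using tm_mono2[OF tw] .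
  moreover have "tm (neg t) t = zero" by (simp add: tm_def)
  moreover have "tm (neg t) (t \<oplus> w) = tm (neg t) (imp (neg t) w)" by (simp add: imp_def)
  ultimately have m0: "le (tm (neg t) (imp (neg t) w)) zero" by simp
  show ?thesis
  proof (cases "le (neg t) w")
    case True
    hence "le (neg t) zero" using min_ge1 m0 le_trans by blast
    thus ?thesis unfolding t_def le_def imp_def by simp
  next
    case False
    hence "le w (neg t)" using le_total by blast
    hence "le w zero" using min_ge2 m0 le_trans by blast
    hence "le v u" unfolding w_def le_def imp_def by simp
    thus ?thesis using nvu by blast
  qed
qed

lemma lemS: assumes "\<not> le t' t" "le (tm t' u) (tm t u)" shows "le (tm t' u) zero"
proof -
  have "le t t'" using assms(1) le_total by blast
  have a: "le (neg t') (neg t)" using \<open>le t t'\<close> neg_anti by blast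
  have b: "\<not> le (neg t) (neg t')" using assms(1) neg_anti_iff by blast
  have "le (neg (tm t u)) (neg (tm t' u))" using assms(2) neg_anti by blast
  hence "le (neg u \<oplus> neg t) (neg u \<oplus> neg t')" by (simp add: tm_def comm)
  hence "neg u \<oplus> neg t' \<in> P" using canc[OF b a] by blast
  thus ?thesis by (simp add: le_def imp_def tm_def comm)
qed

lemma strict_imp: assumes "w \<notin> P" "f \<notin> P" shows "\<not> le (imp w f) f"
proof
  assume "le (imp w f) f"
  hence "le (f \<oplus> neg w) (f \<oplus> zero)" by (simp add: imp_def comm)
  moreover have "\<not> le (neg w) zero" using assms(1) by (simp add: le_def imp_def)
  ultimately have "f \<oplus> zero \<in> P" using canc[of "neg w" zero f] by simp
  thus False using assms(2) by simp
qed

definition upset where "upset U \<longleftrightarrow> (\<forall>x y. x \<in> U \<longrightarrow> le x y \<longrightarrow> y \<in> U)"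
definition cut where "cut U \<longleftrightarrow> upset U \<and> U \<noteq> {} \<and> U \<noteq> UNIV"
definition Q where "Q U V = {t. \<forall>u\<in>U. tm t u \<in> V}"
definition R where "R U V \<longleftrightarrow> (\<forall>x\<in>V. \<forall>y. y \<notin> U \<longrightarrow> le y x)"

lemma upsetD: "upset U \<Longrightarrow> x \<in> U \<Longrightarrow> le x y \<Longrightarrow> y \<in> U" unfolding upset_def by blast
lemma upset_P: "upset P" unfolding upset_def le_def using MP by blast
lemma cut_one: "cut U \<Longrightarrow> one \<in> U" unfolding cut_def using upsetD le_one by blast
lemma cut_Psub: "cut U \<Longrightarrow> P \<subseteq> U" using cut_one upsetD inP unfolding cut_def by blast
lemma cut_zero: "cut U \<Longrightarrow> zero \<notin> U" unfolding cut_def using upsetD le_zero by blast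
lemma cut_notin: "cut U \<Longrightarrow> y \<notin> U \<Longrightarrow> x \<in> U \<Longrightarrow> le y x"
  unfolding cut_def using upsetD le_total by blast
lemma comparable: "upset U \<Longrightarrow> upset V \<Longrightarrow> U \<subseteq> V \<or> V \<subseteq> U"
  using upsetD le_total by blast
lemma upset_Int: "upset U \<Longrightarrow> upset V \<Longrightarrow> upset (U \<inter> V)" unfolding upset_def by blast
lemma upset_Q: "upset V \<Longrightarrow> upset (Q U V)" unfolding upset_def Q_def using tm_mono by blast

lemma setQ: assumes "upset W" "upset V"
  shows "{z. \<forall>a. a \<notin> V \<longrightarrow> imp z a \<notin> W} = Q W V"
proof (intro set_eqI iffI)
  fix z assume z: "z \<in> {z. \<forall>a. a \<notin> V \<longrightarrow> imp z a \<notin> W}"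
  show "z \<in> Q W V" unfolding Q_def
  proof (intro CollectI ballI, rule ccontr)
    fix u assume "u \<in> W" "tm z u \<notin> V"
    hence "imp z (tm z u) \<notin> W" using z by blast
    thus False using upsetD[OF assms(1) \<open>u \<in> W\<close> le_tm_imp] by blast
  qed
next
  fix z assume z: "z \<in> Q W V"
  show "z \<in> {z. \<forall>a. a \<notin> V \<longrightarrow> imp z a \<notin> W}"
  proof (intro CollectI allI impI notI)
    fix a assume "a \<notin> V" "imp z a \<in> W"
    hence "tm z (imp z a) \<in> V" using z unfolding Q_def by blast
    thus False using \<open>a \<notin> V\<close> upsetD[OF assms(2) _ min_le2] by blast
  qed
qed

lemma K_eq: "upset F \<Longrightarrow> filt_K oplus neg F = Q F F"
  unfolding filt_K_def mvimp using setQ[of F F] by simp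
lemma sq_eq: assumes "upset F" "upset G" shows "sq_imp oplus neg F G = Q (F \<inter> G) G"
proof -
  have "sq_imp oplus neg F G = {z. \<forall>a. a \<notin> G \<longrightarrow> imp z a \<notin> F \<inter> G}"
    unfolding sq_imp_def filt_sub_def mvimp by blast
  thus ?thesis using setQ[OF upset_Int[OF assms] assms(2)] by simp
qed
lemma plus_eq: "filt_plus oplus neg zero F = {z. neg z \<notin> F}"
  unfolding filt_plus_def filt_sub_def mvimp by (simp add: imp_zero)

lemma sup_le: "le a b \<Longrightarrow> le (neg (imp a b) \<oplus> b) b"
proof -
  assume "le a b"
  hence "le (neg (imp a b)) zero" using neg_anti[of one "imp a b"] unfolding le_def by simp
  thus ?thesis using mono_plus[of "neg (imp a b)" zero b] by simp
qed

lemma PS_iff: "F \<in> PSpec oplus neg zero P \<longleftrightarrow> cut F \<and> Q F F = P"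
proof
  assume F: "F \<in> PSpec oplus neg zero P"
  hence lf: "lattice_filter oplus neg zero F" and pr: "F \<noteq> UNIV"
    and K: "filt_K oplus neg F = P"
    unfolding PSpec_def prime_lattice_filter_def by auto
  have up: "upset F" unfolding upset_def
  proof (intro allI impI, rule ccontr)
    fix x y assume "x \<in> F" "le x y" "y \<notin> F"
    hence "imp x y \<in> filt_K oplus neg F" using K le_def by simp
    hence "imp (imp x y) y \<notin> F" using \<open>y \<notin> F\<close> unfolding filt_K_def by simp
    moreover have "mv_le oplus neg zero x (imp (imp x y) y)"
      unfolding mv_le_def mv_one_def by (simp add: le_dbl)
    ultimately show False using lf \<open>x \<in> F\<close> unfolding lattice_filter_def by blast
  qed
  show "cut F \<and> Q F F = P" using up lf pr K K_eq[OF up] unfolding cut_def lattice_filter_def by auto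
next
  assume a: "cut F \<and> Q F F = P"
  hence up: "upset F" and ne: "F \<noteq> {}" and pr: "F \<noteq> UNIV" and QP: "Q F F = P"
    unfolding cut_def by auto
  have lf: "lattice_filter oplus neg zero F" unfolding lattice_filter_def
  proof (intro conjI allI impI)
    show "F \<noteq> {}" by fact
  next
    fix x y assume "x \<in> F" "mv_le oplus neg zero x y"
    thus "y \<in> F" using up upsetD unfolding mv_le_def mv_one_def by (auto intro: le_of)
  next
    fix x y assume xy: "x \<in> F" "y \<in> F"
    have eq: "mv_inf oplus neg x y = tm y (imp y x)"
      unfolding mv_inf_def mv_sup_def tm_def imp_def by (simp add: comm)
    show "mv_inf oplus neg x y \<in> F" unfolding eq
      using le_total[of x y] min_ge1[of y x] min_ge2[of x y] xy up upsetD by blast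
  qed
  have prm: "\<forall>a b. mv_sup oplus neg a b \<in> F \<longrightarrow> a \<in> F \<or> b \<in> F"
  proof (intro allI impI)
    fix a b assume s: "mv_sup oplus neg a b \<in> F"
    have e1: "mv_sup oplus neg a b = neg (imp a b) \<oplus> b" unfolding mv_sup_def imp_def ..
    have e2: "mv_sup oplus neg a b = neg (imp b a) \<oplus> a" unfolding mv_sup_def imp_def by (rule luk)
    show "a \<in> F \<or> b \<in> F"
    proof (cases "le a b")
      case True thus ?thesis using sup_le[of a b] e1 s up upsetD by metis
    next
      case False thus ?thesis using le_total[of a b] sup_le[of b a] e2 s up upsetD by metis
    qed
  qed
  show "F \<in> PSpec oplus neg zero P" unfolding PSpec_def prime_lattice_filter_def
    using lf pr prm K_eq[OF up] QP by auto
qed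

lemma PS_cut: "F \<in> PSpec oplus neg zero P \<Longrightarrow> cut F" using PS_iff by blast
lemma PS_up: "F \<in> PSpec oplus neg zero P \<Longrightarrow> upset F" using PS_iff cut_def by blast
lemma PS_QP: "F \<in> PSpec oplus neg zero P \<Longrightarrow> Q F F = P" using PS_iff by blast
lemma PS_zw: "F \<in> PSpec oplus neg zero P \<Longrightarrow> t \<notin> P \<Longrightarrow> \<exists>u\<in>F. tm t u \<notin> F"
  using PS_QP unfolding Q_def by blast

lemma P_sub_Q: "upset V \<Longrightarrow> U \<subseteq> V \<Longrightarrow> upset U \<Longrightarrow> P \<subseteq> Q U V"
  unfolding Q_def using P_tm upsetD by blast

lemma cut_P: "cut P" unfolding cut_def using upset_P proper oneP by blast
lemma P_PS: "P \<in> PSpec oplus neg zero P"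
proof -
  have "Q P P \<subseteq> P" unfolding Q_def using oneP tm_one(1) by fastforce
  thus ?thesis using PS_iff cut_P P_sub_Q upset_P by blast
qed

lemma R_sub: "cut U \<Longrightarrow> V \<subseteq> U \<Longrightarrow> R U V" unfolding R_def using cut_notin by blast
lemma R_refl: "cut U \<Longrightarrow> R U U" using R_sub by blast
lemma R_total: "cut U \<Longrightarrow> cut V \<Longrightarrow> R U V \<or> R V U"
  using comparable[of U V] R_sub[of U V] R_sub[of V U] unfolding cut_def by blast
lemma R_trans: assumes "R U V" "R V W" shows "R U W"
  unfolding R_def
proof (intro ballI allI impI, rule ccontr)
  fix x y assume x: "x \<in> W" and y: "y \<notin> U" and n: "\<not> le y x"
  then obtain m where m: "\<not> le m x" "\<not> le y m" using dense' by blast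
  show False
  proof (cases "m \<in> V")
    case True thus False using assms(1) y m unfolding R_def by blast
  next
    case False thus False using assms(2) x m unfolding R_def by blast
  qed
qed
lemma R_toP: "R U P" unfolding R_def using inP le_one le_trans by blast

lemma lemA: assumes F: "F \<in> PSpec oplus neg zero P" and G: "G \<in> PSpec oplus neg zero P"
  shows "sq_imp oplus neg F G = P \<longleftrightarrow> R F G"
proof (cases "G \<subseteq> F")
  case True
  hence "F \<inter> G = G" by blast
  hence "sq_imp oplus neg F G = P" using sq_eq[OF PS_up[OF F] PS_up[OF G]] PS_QP[OF G] by simp
  thus ?thesis using R_sub True PS_cut F by blast
next
  case False
  hence FG: "F \<subseteq> G" using comparable PS_up F G by blast
  hence "F \<inter> G = F" by blast
  hence sq: "sq_imp oplus neg F G = Q F G" using sq_eq[OF PS_up[OF F] PS_up[OF G]] by simp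
  have PQ: "P \<subseteq> Q F G" using P_sub_Q PS_up F G FG by blast
  show ?thesis unfolding sq
  proof
    assume QP: "Q F G = P"
    show "R F G" unfolding R_def
    proof (intro ballI allI impI, rule ccontr)
      fix x y assume x: "x \<in> G" and y: "y \<notin> F" and n: "\<not> le y x"
      have "imp y x \<notin> P" using n le_def by simp
      moreover have "imp y x \<in> Q F G" unfolding Q_def
      proof (intro CollectI ballI)
        fix u assume u: "u \<in> F"
        have "le y u" using cut_notin PS_cut F y u by blast
        hence "le (tm (imp y x) y) (tm (imp y x) u)" using tm_mono2 by blast
        moreover have "le x y" using n le_total by blast
        hence "le x (tm (imp y x) y)" using min_ge2[of x y] by (simp add: tm_comm)
        ultimately show "tm (imp y x) u \<in> G" using x PS_up G upsetD le_trans by blast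
      qed
      ultimately show False using QP by blast
    qed
  next
    assume RFG: "R F G"
    have "Q F G \<subseteq> P"
    proof
      fix t assume t: "t \<in> Q F G"
      show "t \<in> P"
      proof (rule ccontr)
        assume "t \<notin> P"
        hence "\<not> le one t" using inP by blast
        then obtain t' where t': "\<not> le t' t" "\<not> le one t'" using dense' by blast
        hence "t' \<notin> P" using inP by blast
        then obtain u where u: "u \<in> F" "tm t' u \<notin> F" using PS_zw F by blast
        have tu: "tm t u \<in> G" using t u unfolding Q_def by blast
        have le1: "le (tm t u) (tm t' u)" using tm_mono t' le_total by blast
        hence sG: "tm t' u \<in> G" using tu PS_up G upsetD by blast
        have "le (tm t' u) (tm t u)" using RFG tu u unfolding R_def by blast
        hence "le (tm t' u) zero" using lemS t' by blast
        hence "zero \<in> G" using sG PS_up G upsetD by blast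
        thus False using cut_zero PS_cut G by blast
      qed
    qed
    thus "Q F G = P" using PQ by blast
  qed
qed

lemma single: assumes H: "H \<in> PSpec oplus neg zero P" and R: "R P H" shows "H = P"
proof
  show "P \<subseteq> H" using cut_Psub PS_cut H by blast
  show "H \<subseteq> P"
  proof
    fix h assume h: "h \<in> H"
    show "h \<in> P"
    proof (rule ccontr)
      assume "h \<notin> P"
      hence "\<not> le one h" using inP by blast
      then obtain m where "\<not> le m h" "\<not> le one m" using dense' by blast
      thus False using R h inP unfolding R_def by blast
    qed
  qed
qed

lemma plus_PS: assumes F: "F \<in> PSpec oplus neg zero P" shows "filt_plus oplus neg zero F \<in> PSpec oplus neg zero P"
proof -
  let ?Fp = "{z. neg z \<notin> F}"
  have cF: "cut F" using PS_cut F .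
  have up: "upset ?Fp" unfolding upset_def
  proof (intro allI impI)
    fix x y assume "x \<in> ?Fp" "le x y"
    thus "y \<in> ?Fp" using neg_anti upsetD cF unfolding cut_def by blast
  qed
  have "one \<in> ?Fp" using cut_zero cF by simp
  moreover have "zero \<notin> ?Fp" using cut_one cF by simp
  ultimately have cp: "cut ?Fp" using up unfolding cut_def by blast
  have "Q ?Fp ?Fp \<subseteq> P"
  proof
    fix t assume t: "t \<in> Q ?Fp ?Fp"
    show "t \<in> P"
    proof (rule ccontr)
      assume "t \<notin> P"
      then obtain u where u: "u \<in> F" "tm t u \<notin> F" using PS_zw F by blast
      have "neg (tm t u) \<in> ?Fp" using u by simp
      hence "tm t (neg (tm t u)) \<in> ?Fp" using t unfolding Q_def by blast
      hence "neg (tm t (neg (tm t u))) \<notin> F" by simp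
      moreover have "neg (tm t (neg (tm t u))) = imp t (tm t u)" by (simp add: tm_def imp_def)
      ultimately have "imp t (tm t u) \<notin> F" by simp
      thus False using upsetD[OF _ u(1) le_tm_imp] cF unfolding cut_def by blast
    qed
  qed
  hence "Q ?Fp ?Fp = P" using P_sub_Q[OF up _ up] by blast
  thus ?thesis unfolding plus_eq using PS_iff cp by blast
qed

lemma Q_PS: assumes F: "F \<in> PSpec oplus neg zero P" and G: "G \<in> PSpec oplus neg zero P" and FG: "F \<subseteq> G"
  shows "Q F G \<in> PSpec oplus neg zero P"
proof -
  let ?H = "Q F G"
  have cF: "cut F" and cG: "cut G" using PS_cut F G by auto
  have upH: "upset ?H" using upset_Q cG cut_def by blast
  have PH: "P \<subseteq> ?H" using P_sub_Q cF cG FG cut_def by blast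
  obtain u where "u \<in> F" using cF cut_def by blast
  hence "zero \<notin> ?H" using cut_zero[OF cG] unfolding Q_def by auto
  hence cH: "cut ?H" using upH PH oneP unfolding cut_def by blast
  have "Q ?H ?H \<subseteq> P"
  proof
    fix t assume t: "t \<in> Q ?H ?H"
    show "t \<in> P"
    proof (rule ccontr)
      assume "t \<notin> P"
      hence "\<not> le one t" using inP by blast
      then obtain t1 where t1: "\<not> le t1 t" "\<not> le one t1" using dense' by blast
      have "t1 \<notin> P" using t1 inP by blast
      then obtain u1 where u1: "u1 \<in> F" "tm t1 u1 \<notin> F" using PS_zw F by blast
      define w where "w = imp t1 t"
      have "w \<notin> P" using t1 unfolding w_def le_def by blast
      then obtain v where v: "v \<in> G" "tm w v \<notin> G" using PS_zw G by blast
      define s where "s = tm t1 u1"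
      define h where "h = imp s v"
      have hH: "h \<in> ?H" unfolding Q_def
      proof (intro CollectI ballI)
        fix u assume u: "u \<in> F"
        have su: "le s u" using cut_notin[OF cF] u1 u s_def by blast
        show "tm h u \<in> G"
        proof (cases "le s v")
          case True
          hence "le u (tm h u)" using imp_P h_def by blast
          thus ?thesis using u FG upsetD cG cut_def by blast
        next
          case False
          hence "le v s" using le_total by blast
          hence "le v (tm s (imp s v))" using min_ge2 by blast
          moreover have "le (tm h s) (tm h u)" using tm_mono2 su by blast
          moreover have "tm h s = tm s (imp s v)" unfolding h_def by (simp add: tm_comm)
          ultimately have "le v (tm h u)" using le_trans by metis
          thus ?thesis using v upsetD cG cut_def by blast
        qed
      qed
      hence "tm t h \<in> ?H" using t unfolding Q_def by blast
      hence a: "tm (tm t h) u1 \<in> G" using u1 unfolding Q_def by blast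
      have "le t t1" using t1 le_total by blast
      hence "le t (tm t1 w)" using min_ge2 w_def by blast
      hence "le (tm (tm t h) u1) (tm (tm (tm t1 w) h) u1)" using tm_mono by blast
      moreover have "tm (tm (tm t1 w) h) u1 = tm w (tm s (imp s v))"
        unfolding s_def h_def by (simp add: tm_assoc tm_comm tm_lcomm)
      moreover have "le (tm w (tm s (imp s v))) (tm w v)" using tm_mono2 min_le2 by blast
      ultimately have "le (tm (tm t h) u1) (tm w v)" using le_trans by metis
      thus False using a v upsetD cG cut_def by blast
    qed
  qed
  hence "Q ?H ?H = P" using P_sub_Q[OF upH _ upH] by blast
  thus ?thesis using PS_iff cH by blast
qed

lemma sq_PS: assumes F: "F \<in> PSpec oplus neg zero P" and G: "G \<in> PSpec oplus neg zero P"
  shows "sq_imp oplus neg F G \<in> PSpec oplus neg zero P"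
proof (cases "G \<subseteq> F")
  case True
  hence "F \<inter> G = G" by blast
  hence "sq_imp oplus neg F G = P" using sq_eq[OF PS_up[OF F] PS_up[OF G]] PS_QP[OF G] by simp
  thus ?thesis using P_PS by simp
next
  case False
  hence FG: "F \<subseteq> G" using comparable PS_up F G by blast
  hence "F \<inter> G = F" by blast
  hence "sq_imp oplus neg F G = Q F G" using sq_eq[OF PS_up[OF F] PS_up[OF G]] by simp
  thus ?thesis using Q_PS F G FG by simp
qed

lemma sq_sub: "F \<in> PSpec oplus neg zero P \<Longrightarrow> G \<in> PSpec oplus neg zero P \<Longrightarrow> F \<subseteq> G \<Longrightarrow> sq_imp oplus neg F G = Q F G"
  using sq_eq[OF PS_up PS_up, of F G] by (simp add: Int_absorb2)
lemma sq_sup: "F \<in> PSpec oplus neg zero P \<Longrightarrow> G \<in> PSpec oplus neg zero P \<Longrightarrow> G \<subseteq> F \<Longrightarrow> sq_imp oplus neg F G = P"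
  using sq_eq[OF PS_up PS_up, of F G] PS_QP[of G] by (simp add: Int_absorb1)

lemma neg_R: assumes RFG: "R F G" shows "R (filt_plus oplus neg zero G) (filt_plus oplus neg zero F)"
  unfolding R_def plus_eq
proof (intro ballI allI impI)
  fix x y assume a: "x \<in> {z. neg z \<notin> F}" "y \<notin> {z. neg z \<notin> G}"
  hence "le (neg x) (neg y)" using RFG unfolding R_def by blast
  thus "le y x" using neg_anti_iff by blast
qed

lemma mono2: assumes F: "F \<in> PSpec oplus neg zero P" and G: "G \<in> PSpec oplus neg zero P"
  and G': "G' \<in> PSpec oplus neg zero P" and RG: "R G G'"
  shows "R (sq_imp oplus neg F G) (sq_imp oplus neg F G')"
  unfolding sq_eq[OF PS_up[OF F] PS_up[OF G]] sq_eq[OF PS_up[OF F] PS_up[OF G']] R_def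
proof (intro ballI allI impI, rule ccontr)
  fix x y assume x: "x \<in> Q (F \<inter> G') G'" and y: "y \<notin> Q (F \<inter> G) G" and n: "\<not> le y x"
  have xP: "x \<notin> P" using n inP le_one le_trans by blast
  obtain f where f: "f \<in> F" "f \<in> G" "tm y f \<notin> G" using y unfolding Q_def by blast
  show False
  proof (cases "f \<in> G'")
    case True
    hence xf: "tm x f \<in> G'" using x f unfolding Q_def by blast
    have "le (tm y f) (tm x f)" using RG xf f unfolding R_def by blast
    hence "le (tm y f) zero" using lemS n by blast
    moreover have "le (tm x f) (tm y f)" using tm_mono n le_total by blast
    ultimately have "le (tm x f) zero" using le_trans by blast
    hence "zero \<in> G'" using upsetD[OF PS_up[OF G'] xf] by blast
    thus False using cut_zero PS_cut G' by blast
  next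
    case False
    hence "G' \<subseteq> F" using comparable[OF PS_up[OF F] PS_up[OF G']] f by blast
    hence "F \<inter> G' = G'" by blast
    hence "x \<in> P" using x PS_QP[OF G'] by simp
    thus False using xP by blast
  qed
qed

lemma anti1: assumes F: "F \<in> PSpec oplus neg zero P" and F': "F' \<in> PSpec oplus neg zero P"
  and G: "G \<in> PSpec oplus neg zero P" and RF: "R F' F"
  shows "R (sq_imp oplus neg F G) (sq_imp oplus neg F' G)"
  unfolding sq_eq[OF PS_up[OF F] PS_up[OF G]] sq_eq[OF PS_up[OF F'] PS_up[OF G]] R_def
proof (intro ballI allI impI, rule ccontr)
  fix x y assume x: "x \<in> Q (F' \<inter> G) G" and y: "y \<notin> Q (F \<inter> G) G" and n: "\<not> le y x"
  have upG: "upset G" using PS_up G .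
  obtain f where f: "f \<in> F" "f \<in> G" "tm y f \<notin> G" using y unfolding Q_def by blast
  have lxy: "le x y" using n le_total by blast
  show False
  proof (cases "f \<in> F'")
    case True
    hence "tm x f \<in> G" using x f unfolding Q_def by blast
    thus False using tm_mono[OF lxy] f upsetD[OF upG] by blast
  next
    case False
    hence fP: "f \<notin> P" using cut_Psub PS_cut F' by blast
    define w where "w = imp y x"
    have wP: "w \<notin> P" using n unfolding w_def le_def .
    define f' where "f' = imp w f"
    have nf: "\<not> le f' f" using strict_imp wP fP f'_def by blast
    have f'F': "f' \<in> F'" using RF f nf unfolding R_def by blast
    have f'G: "f' \<in> G" using upsetD[OF upG f(2) le_imp_imp'] f'_def by blast
    hence xf: "tm x f' \<in> G" using x f'F' unfolding Q_def by blast
    have "le x (tm y w)" using min_ge2 lxy w_def by blast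
    hence "le (tm x f') (tm (tm y w) f')" using tm_mono by blast
    moreover have "tm (tm y w) f' = tm y (tm w (imp w f))" by (simp add: tm_assoc f'_def)
    moreover have "le (tm y (tm w (imp w f))) (tm y f)" using tm_mono2 min_le2 by blast
    ultimately have "le (tm x f') (tm y f)" using le_trans by metis
    thus False using xf f upsetD[OF upG] by blast
  qed
qed

lemma E_iff: "(F, G) \<in> pspec_equiv oplus neg zero P \<longleftrightarrow>
   F \<in> PSpec oplus neg zero P \<and> G \<in> PSpec oplus neg zero P \<and> R F G \<and> R G F"
  unfolding pspec_equiv_def using lemA by blast

lemma E_sq: assumes "(F, F') \<in> pspec_equiv oplus neg zero P" "(G, G') \<in> pspec_equiv oplus neg zero P"
  shows "(sq_imp oplus neg F G, sq_imp oplus neg F' G') \<in> pspec_equiv oplus neg zero P"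
proof -
  have h: "F \<in> PSpec oplus neg zero P" "F' \<in> PSpec oplus neg zero P" "G \<in> PSpec oplus neg zero P"
    "G' \<in> PSpec oplus neg zero P" "R F F'" "R F' F" "R G G'" "R G' G" using assms E_iff by auto
  have "R (sq_imp oplus neg F G) (sq_imp oplus neg F' G')"
    using R_trans[OF anti1[OF h(1) h(2) h(3) h(6)] mono2[OF h(2) h(3) h(4) h(7)]] .
  moreover have "R (sq_imp oplus neg F' G') (sq_imp oplus neg F G)"
    using R_trans[OF anti1[OF h(2) h(1) h(4) h(5)] mono2[OF h(1) h(4) h(3) h(8)]] .
  ultimately show ?thesis using E_iff sq_PS h by blast
qed

lemma E_plus: assumes "(F, F') \<in> pspec_equiv oplus neg zero P"
  shows "(filt_plus oplus neg zero F, filt_plus oplus neg zero F') \<in> pspec_equiv oplus neg zero P"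
proof -
  have h: "F \<in> PSpec oplus neg zero P" "F' \<in> PSpec oplus neg zero P" "R F F'" "R F' F"
    using assms E_iff by auto
  show ?thesis using E_iff plus_PS[OF h(1)] plus_PS[OF h(2)] neg_R[OF h(3)] neg_R[OF h(4)] by blast
qed

lemma sq_P: assumes G: "G \<in> PSpec oplus neg zero P" shows "sq_imp oplus neg P G = G"
proof -
  have "sq_imp oplus neg P G = Q P G" using sq_sub[OF P_PS G] cut_Psub PS_cut G by blast
  also have "\<dots> = G"
  proof
    show "Q P G \<subseteq> G" unfolding Q_def using oneP by fastforce
    show "G \<subseteq> Q P G" unfolding Q_def
    proof (intro subsetI CollectI ballI)
      fix t p assume "t \<in> G" "p \<in> P"
      hence "le t (tm p t)" using P_tm by blast
      thus "tm t p \<in> G" using upsetD[OF PS_up[OF G] \<open>t \<in> G\<close>] by (simp add: tm_comm)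
    qed
  qed
  finally show ?thesis .
qed

lemma R_P_iff: "H \<in> PSpec oplus neg zero P \<Longrightarrow> R P H \<longleftrightarrow> H = P"
  using single R_refl cut_P by blast

lemma W2core: assumes F: "F \<in> PSpec oplus neg zero P" and G: "G \<in> PSpec oplus neg zero P"
  and K: "K \<in> PSpec oplus neg zero P"
  shows "R (sq_imp oplus neg F G) (sq_imp oplus neg (sq_imp oplus neg G K) (sq_imp oplus neg F K))"
proof (cases "R F G")
  case True
  hence "sq_imp oplus neg F G = P" using lemA F G by blast
  moreover have "R (sq_imp oplus neg G K) (sq_imp oplus neg F K)" using anti1[OF G F K True] .
  hence "sq_imp oplus neg (sq_imp oplus neg G K) (sq_imp oplus neg F K) = P"
    using lemA sq_PS F G K by blast
  ultimately show ?thesis using R_refl[OF cut_P] by simp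
next
  case nFG: False
  have "G \<subseteq> F \<Longrightarrow> R F G" using R_sub[OF PS_cut[OF F]] by blast
  hence FG: "F \<subseteq> G" using comparable[OF PS_up[OF F] PS_up[OF G]] nFG by blast
  show ?thesis
  proof (cases "R G K")
    case True
    hence "sq_imp oplus neg G K = P" using lemA G K by blast
    hence "sq_imp oplus neg (sq_imp oplus neg G K) (sq_imp oplus neg F K) = sq_imp oplus neg F K"
      using sq_P[OF sq_PS[OF F K]] by simp
    thus ?thesis using mono2[OF F G K True] by simp
  next
    case False
    have "K \<subseteq> G \<Longrightarrow> R G K" using R_sub[OF PS_cut[OF G]] by blast
    hence GK: "G \<subseteq> K" using comparable[OF PS_up[OF G] PS_up[OF K]] False by blast
    have A: "sq_imp oplus neg F G = Q F G" using sq_sub F G FG by blast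
    have Bd: "sq_imp oplus neg G K = Q G K" using sq_sub G K GK by blast
    have Cd: "sq_imp oplus neg F K = Q F K" using sq_sub F K FG GK by blast
    have BPS: "Q G K \<in> PSpec oplus neg zero P" using Q_PS G K GK by blast
    have CPS: "Q F K \<in> PSpec oplus neg zero P" using Q_PS F K FG GK by blast
    have BC: "Q G K \<subseteq> Q F K" unfolding Q_def using FG by blast
    have D: "sq_imp oplus neg (Q G K) (Q F K) = Q (Q G K) (Q F K)" using sq_sub BPS CPS BC by blast
    have upK: "upset K" using PS_up K .
    show ?thesis unfolding A Bd Cd D R_def
    proof (intro ballI allI impI, rule ccontr)
      fix d q assume d: "d \<in> Q (Q G K) (Q F K)" and q: "q \<notin> Q F G" and n: "\<not> le q d"
      obtain x where x: "x \<in> F" "tm q x \<notin> G" using q unfolding Q_def by blast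
      define w where "w = imp q d"
      have "w \<notin> P" using n unfolding w_def le_def .
      then obtain b where b: "b \<in> Q G K" "tm w b \<notin> Q G K" using PS_zw BPS by blast
      then obtain y' where y': "y' \<in> G" "tm (tm w b) y' \<notin> K" unfolding Q_def by blast
      have "tm d b \<in> Q F K" using d b unfolding Q_def by blast
      hence dbx: "tm (tm d b) x \<in> K" using x unfolding Q_def by blast
      have qy: "le (tm q x) y'" using cut_notin PS_cut G x y' by blast
      have "le d q" using n le_total by blast
      hence "le d (tm q w)" using min_ge2 w_def by blast
      hence "le (tm (tm d b) x) (tm (tm (tm q w) b) x)" using tm_mono by blast
      moreover have "tm (tm (tm q w) b) x = tm (tm w b) (tm q x)" by (simp add: tm_assoc tm_comm tm_lcomm)
      moreover have "le (tm (tm w b) (tm q x)) (tm (tm w b) y')" using tm_mono2 qy by blast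
      ultimately have "le (tm (tm d b) x) (tm (tm w b) y')" using le_trans by metis
      thus False using dbx y' upsetD[OF upK] by blast
    qed
  qed
qed

lemma lemE: assumes F: "F \<in> PSpec oplus neg zero P" and G: "G \<in> PSpec oplus neg zero P" and RFG: "R F G"
  shows "(sq_imp oplus neg (sq_imp oplus neg G F) F, G) \<in> pspec_equiv oplus neg zero P"
proof (cases "G \<subseteq> F")
  case True
  have W: "sq_imp oplus neg G F = Q G F" using sq_sub G F True by blast
  have WPS: "Q G F \<in> PSpec oplus neg zero P" using Q_PS G F True by blast
  have S: "sq_imp oplus neg (Q G F) F = Q (Q G F \<inter> F) F" using sq_eq PS_up WPS F by blast
  have SPS: "Q (Q G F \<inter> F) F \<in> PSpec oplus neg zero P" using sq_PS[OF WPS F] unfolding S .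
  have upF: "upset F" using PS_up F .
  have cF: "cut F" using PS_cut F .
  have r1: "R (Q (Q G F \<inter> F) F) G" unfolding R_def
  proof (intro ballI allI impI, rule ccontr)
    fix y q assume y: "y \<in> G" and q: "q \<notin> Q (Q G F \<inter> F) F" and n: "\<not> le q y"
    obtain w where w: "w \<in> Q G F" "w \<in> F" "tm q w \<notin> F" using q unfolding Q_def by blast
    have "tm w y \<in> F" using w y unfolding Q_def by blast
    moreover have "le (tm w y) (tm w q)" using tm_mono2 n le_total by blast
    ultimately show False using w upsetD[OF upF] by (simp add: tm_comm)
  qed
  have r2: "R G (Q (Q G F \<inter> F) F)" unfolding R_def
  proof (intro ballI allI impI, rule ccontr)
    fix s q assume s: "s \<in> Q (Q G F \<inter> F) F" and q: "q \<notin> G" and n: "\<not> le q s"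
    define e where "e = imp q s"
    have "e \<notin> P" using n unfolding e_def le_def .
    then obtain x1 where x1: "x1 \<in> F" "tm e x1 \<notin> F" using PS_zw F by blast
    define w where "w = imp q x1"
    have wW: "w \<in> Q G F" unfolding Q_def
    proof (intro CollectI ballI)
      fix y' assume y': "y' \<in> G"
      have qy: "le q y'" using cut_notin PS_cut G q y' by blast
      show "tm w y' \<in> F"
      proof (cases "le q x1")
        case True
        hence "le y' (tm w y')" using imp_P w_def by blast
        thus ?thesis using y' True \<open>G \<subseteq> F\<close> upsetD[OF upF] by blast
      next
        case False
        hence "le x1 q" using le_total by blast
        hence "le x1 (tm q w)" using min_ge2 w_def by blast
        moreover have "le (tm w q) (tm w y')" using tm_mono2 qy by blast
        ultimately have "le x1 (tm w y')" using le_trans by (metis tm_comm)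
        thus ?thesis using x1 upsetD[OF upF] by blast
      qed
    qed
    have wF: "w \<in> F" using upsetD[OF upF x1(1) le_imp_imp'] w_def by blast
    have sw: "tm s w \<in> F" using s wW wF unfolding Q_def by blast
    have "le s q" using n le_total by blast
    hence "le s (tm q e)" using min_ge2 e_def by blast
    hence "le (tm s w) (tm (tm q e) w)" using tm_mono by blast
    moreover have "tm (tm q e) w = tm e (tm q (imp q x1))" by (simp add: w_def tm_assoc tm_comm tm_lcomm)
    moreover have "le (tm e (tm q (imp q x1))) (tm e x1)" using tm_mono2 min_le2 by blast
    ultimately have "le (tm s w) (tm e x1)" using le_trans by metis
    thus False using sw x1 upsetD[OF upF] by blast
  qed
  show ?thesis unfolding W S using E_iff SPS G r1 r2 by blast
next
  case False
  hence FG: "F \<subseteq> G" using comparable[OF PS_up[OF F] PS_up[OF G]] by blast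
  have eFG: "(F, G) \<in> pspec_equiv oplus neg zero P" using E_iff F G RFG R_sub PS_cut FG by blast
  have eGG: "(G, G) \<in> pspec_equiv oplus neg zero P" using E_iff G R_refl PS_cut by blast
  have "(sq_imp oplus neg G F, sq_imp oplus neg G G) \<in> pspec_equiv oplus neg zero P" using E_sq eGG eFG by blast
  moreover have "sq_imp oplus neg G G = P" using sq_sup G by blast
  ultimately have "(sq_imp oplus neg (sq_imp oplus neg G F) F, sq_imp oplus neg P G) \<in> pspec_equiv oplus neg zero P"
    using E_sq[of "sq_imp oplus neg G F" P F G] eFG by simp
  thus ?thesis using sq_P G by simp
qed

lemma W4core: assumes F: "F \<in> PSpec oplus neg zero P" and G: "G \<in> PSpec oplus neg zero P"
  shows "R (sq_imp oplus neg (filt_plus oplus neg zero F) (filt_plus oplus neg zero G)) (sq_imp oplus neg G F)"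
proof (cases "R G F")
  case True
  hence "sq_imp oplus neg G F = P" using lemA G F by blast
  thus ?thesis using R_toP by simp
next
  case False
  have "F \<subseteq> G \<Longrightarrow> R G F" using R_sub[OF PS_cut[OF G]] by blast
  hence GF: "G \<subseteq> F" using comparable[OF PS_up[OF F] PS_up[OF G]] False by blast
  have e1: "sq_imp oplus neg G F = Q G F" using sq_sub G F GF by blast
  have FpGp: "filt_plus oplus neg zero F \<subseteq> filt_plus oplus neg zero G" unfolding plus_eq using GF by blast
  have e2: "sq_imp oplus neg (filt_plus oplus neg zero F) (filt_plus oplus neg zero G)
      = Q (filt_plus oplus neg zero F) (filt_plus oplus neg zero G)"
    using sq_sub plus_PS F G FpGp by blast
  have upF: "upset F" using PS_up F .
  show ?thesis unfolding e1 e2 R_def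
  proof (intro ballI allI impI, rule ccontr)
    fix d q assume d: "d \<in> Q G F" and q: "q \<notin> Q (filt_plus oplus neg zero F) (filt_plus oplus neg zero G)"
      and n: "\<not> le q d"
    obtain h where h: "neg h \<notin> F" "neg (tm q h) \<in> G" using q unfolding Q_def plus_eq by blast
    have "tm d (neg (tm q h)) \<in> F" using d h unfolding Q_def by blast
    moreover have "le d q" using n le_total by blast
    hence "le (tm d (neg (tm q h))) (tm q (neg (tm q h)))" using tm_mono by blast
    hence "le (tm d (neg (tm q h))) (tm q (imp q (neg h)))" by (simp only: neg_tm)
    moreover have "le (tm q (imp q (neg h))) (neg h)" using min_le2 .
    ultimately show False using h upsetD[OF upF] le_trans by blast
  qed
qed

lemma equivE: "equiv (PSpec oplus neg zero P) (pspec_equiv oplus neg zero P)"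
proof (rule equivI)
  show "refl_on (PSpec oplus neg zero P) (pspec_equiv oplus neg zero P)"
    unfolding refl_on_def using E_iff R_refl PS_cut by blast
  show "sym (pspec_equiv oplus neg zero P)" unfolding sym_def using E_iff by blast
  show "trans (pspec_equiv oplus neg zero P)" unfolding trans_def using E_iff R_trans by meson
  show "pspec_equiv oplus neg zero P \<subseteq> PSpec oplus neg zero P \<times> PSpec oplus neg zero P"
    unfolding pspec_equiv_def by blast
qed

lemma cls_eq: "F \<in> PSpec oplus neg zero P \<Longrightarrow> G \<in> PSpec oplus neg zero P \<Longrightarrow>
   hatL_class oplus neg zero P F = hatL_class oplus neg zero P G \<longleftrightarrow> (F, G) \<in> pspec_equiv oplus neg zero P"
  unfolding hatL_class_def using equiv_class_eq_iff[OF equivE] by blast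

lemma cls_eqI: "(F, G) \<in> pspec_equiv oplus neg zero P \<Longrightarrow> hatL_class oplus neg zero P F = hatL_class oplus neg zero P G"
  unfolding hatL_class_def using equiv_class_eq[OF equivE] by blast

lemma rep: assumes "F \<in> PSpec oplus neg zero P"
  shows "(F, SOME H. H \<in> hatL_class oplus neg zero P F) \<in> pspec_equiv oplus neg zero P"
proof -
  have "F \<in> hatL_class oplus neg zero P F" unfolding hatL_class_def
    using assms equivE equiv_class_self by fast
  hence "(SOME H. H \<in> hatL_class oplus neg zero P F) \<in> hatL_class oplus neg zero P F" by (rule someI)
  thus ?thesis unfolding hatL_class_def by blast
qed

lemma imp_cls: "F \<in> PSpec oplus neg zero P \<Longrightarrow> G \<in> PSpec oplus neg zero P \<Longrightarrow>
  hatL_imp oplus neg zero P (hatL_class oplus neg zero P F) (hatL_class oplus neg zero P G)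
   = hatL_class oplus neg zero P (sq_imp oplus neg F G)"
proof -
  assume F: "F \<in> PSpec oplus neg zero P" and G: "G \<in> PSpec oplus neg zero P"
  have "(sq_imp oplus neg F G, sq_imp oplus neg (SOME H. H \<in> hatL_class oplus neg zero P F) (SOME H. H \<in> hatL_class oplus neg zero P G)) \<in> pspec_equiv oplus neg zero P"
    using E_sq[OF rep[OF F] rep[OF G]] .
  from cls_eqI[OF this] show ?thesis unfolding hatL_imp_def by simp
qed

lemma neg_cls: "F \<in> PSpec oplus neg zero P \<Longrightarrow>
  hatL_neg oplus neg zero P (hatL_class oplus neg zero P F)
   = hatL_class oplus neg zero P (filt_plus oplus neg zero F)"
proof -
  assume F: "F \<in> PSpec oplus neg zero P"
  from cls_eqI[OF E_plus[OF rep[OF F]]] show ?thesis unfolding hatL_neg_def by simp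
qed

lemma carrierE: "X \<in> hatL_carrier oplus neg zero P \<Longrightarrow> \<exists>F\<in>PSpec oplus neg zero P. X = hatL_class oplus neg zero P F"
  unfolding hatL_carrier_def hatL_class_def by (auto elim: quotientE)
lemma carrierI: "F \<in> PSpec oplus neg zero P \<Longrightarrow> hatL_class oplus neg zero P F \<in> hatL_carrier oplus neg zero P"
  unfolding hatL_carrier_def hatL_class_def by (rule quotientI)

lemma clsP_iff: "H \<in> PSpec oplus neg zero P \<Longrightarrow>
   hatL_class oplus neg zero P H = hatL_class oplus neg zero P P \<longleftrightarrow> H = P"
  using cls_eq[OF _ P_PS] E_iff R_P_iff by blast

lemma le_cls: "F \<in> PSpec oplus neg zero P \<Longrightarrow> G \<in> PSpec oplus neg zero P \<Longrightarrow>
   hatL_imp oplus neg zero P (hatL_class oplus neg zero P F) (hatL_class oplus neg zero P G)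
     = hatL_class oplus neg zero P P \<longleftrightarrow> R F G"
  using imp_cls clsP_iff sq_PS lemA by simp

lemmas PSrules = sq_PS plus_PS P_PS

lemma wajs: "linear_wajsberg_algebra (hatL_carrier oplus neg zero P)
          (hatL_imp oplus neg zero P) (hatL_neg oplus neg zero P) (hatL_class oplus neg zero P P)"
  unfolding linear_wajsberg_algebra_def wajsberg_algebra_def wajsberg_le_def
proof (intro conjI ballI)
  show "hatL_class oplus neg zero P P \<in> hatL_carrier oplus neg zero P" using carrierI P_PS by blast
next
  fix X Y assume X: "X \<in> hatL_carrier oplus neg zero P" and Y: "Y \<in> hatL_carrier oplus neg zero P"
  obtain F where F: "F \<in> PSpec oplus neg zero P" "X = hatL_class oplus neg zero P F" using carrierE[OF X] by blast
  obtain G where G: "G \<in> PSpec oplus neg zero P" "Y = hatL_class oplus neg zero P G" using carrierE[OF Y] by blast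
  show "hatL_imp oplus neg zero P X Y \<in> hatL_carrier oplus neg zero P"
    using F G imp_cls carrierI sq_PS by simp
  show "hatL_imp oplus neg zero P (hatL_imp oplus neg zero P X Y) Y = hatL_imp oplus neg zero P (hatL_imp oplus neg zero P Y X) X"
  proof (cases "R F G")
    case True
    hence "sq_imp oplus neg F G = P" using lemA F G by blast
    hence "hatL_imp oplus neg zero P (hatL_imp oplus neg zero P X Y) Y = Y"
      using F G imp_cls sq_P PSrules by simp
    moreover have "hatL_imp oplus neg zero P (hatL_imp oplus neg zero P Y X) X = Y"
      using F G imp_cls PSrules cls_eqI[OF lemE[OF F(1) G(1) True]] by simp
    ultimately show ?thesis by simp
  next
    case False
    hence True: "R G F" using R_total PS_cut F G by blast
    hence "sq_imp oplus neg G F = P" using lemA F G by blast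
    hence "hatL_imp oplus neg zero P (hatL_imp oplus neg zero P Y X) X = X"
      using F G imp_cls sq_P PSrules by simp
    moreover have "hatL_imp oplus neg zero P (hatL_imp oplus neg zero P X Y) Y = X"
      using F G imp_cls PSrules cls_eqI[OF lemE[OF G(1) F(1) True]] by simp
    ultimately show ?thesis by simp
  qed
  show "hatL_imp oplus neg zero P (hatL_imp oplus neg zero P (hatL_neg oplus neg zero P X) (hatL_neg oplus neg zero P Y)) (hatL_imp oplus neg zero P Y X) =
       hatL_class oplus neg zero P P"
  proof -
    have "R (sq_imp oplus neg (filt_plus oplus neg zero F) (filt_plus oplus neg zero G)) (sq_imp oplus neg G F)"
      using W4core F G by blast
    thus ?thesis using F G neg_cls imp_cls le_cls PSrules by simp
  qed
  show "hatL_imp oplus neg zero P X Y = hatL_class oplus neg zero P P \<or> hatL_imp oplus neg zero P Y X = hatL_class oplus neg zero P P"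
  proof (cases "R F G")
    case True thus ?thesis using F G le_cls by simp
  next
    case False
    hence "R G F" using R_total PS_cut F G by blast
    thus ?thesis using F G le_cls by simp
  qed
next
  fix X assume X: "X \<in> hatL_carrier oplus neg zero P"
  obtain F where F: "F \<in> PSpec oplus neg zero P" "X = hatL_class oplus neg zero P F" using carrierE[OF X] by blast
  show "hatL_neg oplus neg zero P X \<in> hatL_carrier oplus neg zero P" using F neg_cls carrierI plus_PS by simp
  show "hatL_imp oplus neg zero P (hatL_class oplus neg zero P P) X = X" using F imp_cls sq_P P_PS by simp
next
  fix X Y Z assume X: "X \<in> hatL_carrier oplus neg zero P" and Y: "Y \<in> hatL_carrier oplus neg zero P"
    and Z: "Z \<in> hatL_carrier oplus neg zero P"
  obtain F where F: "F \<in> PSpec oplus neg zero P" "X = hatL_class oplus neg zero P F" using carrierE[OF X] by blast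
  obtain G where G: "G \<in> PSpec oplus neg zero P" "Y = hatL_class oplus neg zero P G" using carrierE[OF Y] by blast
  obtain K where K: "K \<in> PSpec oplus neg zero P" "Z = hatL_class oplus neg zero P K" using carrierE[OF Z] by blast
  have "R (sq_imp oplus neg F G) (sq_imp oplus neg (sq_imp oplus neg G K) (sq_imp oplus neg F K))"
    using W2core F G K by blast
  thus "hatL_imp oplus neg zero P (hatL_imp oplus neg zero P X Y)
        (hatL_imp oplus neg zero P (hatL_imp oplus neg zero P Y Z) (hatL_imp oplus neg zero P X Z)) =
       hatL_class oplus neg zero P P" using F G K imp_cls le_cls PSrules by simp
qed

end

theorem mainTheorem18:
  fixes oplus :: "'a \<Rightarrow> 'a \<Rightarrow> 'a" and neg :: "'a \<Rightarrow> 'a" and zero :: 'a and P :: "'a set"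
  assumes mv: "mv_algebra oplus neg zero"
    and prime: "prime_impl_filter oplus neg zero P"
    and proper: "P \<noteq> UNIV"
    and nondiscrete: "quot_non_discrete oplus neg zero P"
  shows "equiv (PSpec oplus neg zero P) (pspec_equiv oplus neg zero P)
    \<and> (\<forall>F \<in> PSpec oplus neg zero P. filt_plus oplus neg zero F \<in> PSpec oplus neg zero P)
    \<and> (\<forall>F \<in> PSpec oplus neg zero P. \<forall>G \<in> PSpec oplus neg zero P.
          sq_imp oplus neg F G \<in> PSpec oplus neg zero P)
    \<and> (\<forall>F F'. (F, F') \<in> pspec_equiv oplus neg zero P \<longrightarrow>
          (filt_plus oplus neg zero F, filt_plus oplus neg zero F') \<in> pspec_equiv oplus neg zero P)
    \<and> (\<forall>F F' G G'. (F, F') \<in> pspec_equiv oplus neg zero P \<longrightarrow> (G, G') \<in> pspec_equiv oplus neg zero P \<longrightarrow>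
          (sq_imp oplus neg F G, sq_imp oplus neg F' G') \<in> pspec_equiv oplus neg zero P)
    \<and> linear_wajsberg_algebra (hatL_carrier oplus neg zero P)
          (hatL_imp oplus neg zero P) (hatL_neg oplus neg zero P) (hatL_class oplus neg zero P P)
    \<and> (\<forall>F \<in> PSpec oplus neg zero P. \<forall>G \<in> PSpec oplus neg zero P.
          wajsberg_le (hatL_imp oplus neg zero P) (hatL_class oplus neg zero P P)
             (hatL_class oplus neg zero P F) (hatL_class oplus neg zero P G)
          \<longleftrightarrow> sq_imp oplus neg F G = P)"
proof -
  interpret mvl oplus neg zero P by (unfold_locales) (rule mv, rule prime, rule proper, rule nondiscrete)
  have c7: "\<forall>F \<in> PSpec oplus neg zero P. \<forall>G \<in> PSpec oplus neg zero P.
          wajsberg_le (hatL_imp oplus neg zero P) (hatL_class oplus neg zero P P)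
             (hatL_class oplus neg zero P F) (hatL_class oplus neg zero P G)
          \<longleftrightarrow> sq_imp oplus neg F G = P"
  proof (intro ballI)
    fix F G assume F: "F \<in> PSpec oplus neg zero P" and G: "G \<in> PSpec oplus neg zero P"
    show "wajsberg_le (hatL_imp oplus neg zero P) (hatL_class oplus neg zero P P)
             (hatL_class oplus neg zero P F) (hatL_class oplus neg zero P G)
          \<longleftrightarrow> sq_imp oplus neg F G = P"
      unfolding wajsberg_le_def using le_cls[OF F G] lemA[OF F G] by simp
  qed
  have c2: "\<forall>F \<in> PSpec oplus neg zero P. filt_plus oplus neg zero F \<in> PSpec oplus neg zero P"
    using plus_PS by blast
  have c3: "\<forall>F \<in> PSpec oplus neg zero P. \<forall>G \<in> PSpec oplus neg zero P.
          sq_imp oplus neg F G \<in> PSpec oplus neg zero P" using sq_PS by blast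
  have c4: "\<forall>F F'. (F, F') \<in> pspec_equiv oplus neg zero P \<longrightarrow>
          (filt_plus oplus neg zero F, filt_plus oplus neg zero F') \<in> pspec_equiv oplus neg zero P"
    using E_plus by blast
  have c5: "\<forall>F F' G G'. (F, F') \<in> pspec_equiv oplus neg zero P \<longrightarrow> (G, G') \<in> pspec_equiv oplus neg zero P \<longrightarrow>
          (sq_imp oplus neg F G, sq_imp oplus neg F' G') \<in> pspec_equiv oplus neg zero P"
    using E_sq by blast
  show ?thesis by (intro conjI equivE c2 c3 c4 c5 wajs c7)
qed

end
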